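(* Let $k,\ell\ge2$ and $c\le 1$. There is a constant $\delta>0$ such that with high probability no set of $t$ vertices of $\hat W_n=\hat W^{k,\ell}_{n,cn}$ with $0<t<\delta n$ (a set of total weight $\ell t$) induces edges of total weight $\ell t$ or more.
   Context: $\hat W_n$: weighted hypergraph with vertex set $\mathbb{Z}_n$, each vertex of weight $\ell$; ordinary edges $e_1,\dots,e_{cn}$, each a multiset of $k$ independent uniformly random elements of $\mathbb{Z}_n$, of weight $1$; helper edges $\{i,i+1\}$ for $i\in\mathbb{Z}_n$ (mod $n$), of weight $\ell-1$. A set $S$ of vertices induces an edge if all vertices of the edge lie in $S$. "With high probability" means with probability tending to $1$ as $n\to\infty$. *)

theory Defs
  imports "HOL-Probability.Probability"
begin

text \<open>Random ordinary edges of W_n: m independent edges, each a k-tuple of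
independent uniform elements of Z_n = {0..<n}.  The joint law is the uniform
distribution on all families E i j (i < m, j < k) with values in {0..<n},
which is the same as independent uniform choices.\<close>
definition edges_pmf :: "nat \<Rightarrow> nat \<Rightarrow> nat \<Rightarrow> (nat \<Rightarrow> nat \<Rightarrow> nat) pmf" where
  "edges_pmf n k m = pmf_of_set ({..<m} \<rightarrow>\<^sub>E ({..<k} \<rightarrow>\<^sub>E {..<n}))"

text \<open>Total weight of the edges induced by S: each ordinary edge i (weight 1)
is induced if all its vertices lie in S; each helper edge {i, i+1 mod n}
(weight l - 1) is induced if both endpoints lie in S.\<close>
definition induced_weight ::
  "nat \<Rightarrow> nat \<Rightarrow> nat \<Rightarrow> nat \<Rightarrow> (nat \<Rightarrow> nat \<Rightarrow> nat) \<Rightarrow> nat set \<Rightarrow> nat" where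
  "induced_weight n k m l E S =
     card {i \<in> {..<m}. E i ` {..<k} \<subseteq> S}
     + (l - 1) * card {i \<in> {..<n}. i \<in> S \<and> (i + 1) mod n \<in> S}"

end

theory Submission
  imports Defs
begin


definition runs :: "nat set \<Rightarrow> nat" where
  "runs S = card {i\<in>S. Suc i \<notin> S}"

lemma runs_insert:
  assumes "S \<subseteq> {..<n}"
  shows "runs (insert n S) = (if 0 < n \<and> n - 1 \<in> S then runs S else Suc (runs S))"
proof -
  have fin: "finite S" using assms finite_subset by blast
  have nS: "n \<notin> S" using assms by auto
  have eq: "{i\<in>insert n S. Suc i \<notin> insert n S} = insert n ({i\<in>S. Suc i \<notin> S} - {n - 1})"
    using nS assms by (auto; (metis Suc_pred' diff_Suc_1 less_nat_zero_code neq0_conv)?)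
  show ?thesis
  proof (cases "0 < n \<and> n - 1 \<in> S")
    case True
    have m: "n - 1 \<in> {i\<in>S. Suc i \<notin> S}" using True nS by auto
    then have "card {i\<in>S. Suc i \<notin> S} > 0" using fin by (auto simp: card_gt_0_iff)
    then show ?thesis using True eq fin nS m unfolding runs_def
      by (simp add: card_insert_if card_Diff_singleton)
  next
    case False
    then have "n - 1 \<notin> {i\<in>S. Suc i \<notin> S}" using assms by auto
    then show ?thesis using False eq fin nS unfolding runs_def
      by (simp add: card_insert_if)
  qed
qed

lemma gf_step:
  fixes z :: real assumes z: "z \<ge> 0"
  shows "(\<Sum>S\<in>Pow {..<n}. (1/2)^card S * z ^ runs S * (if 0 < n \<and> n - 1 \<in> S then 2 else 1))
         \<le> (1+z)^n"
proof (induction n)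
  case 0
  then show ?case by (simp add: runs_def)
next
  case (Suc n)
  let ?w = "\<lambda>S. (1/2::real)^card S * z ^ runs S"
  have P: "Pow {..<Suc n} = Pow {..<n} \<union> insert n ` Pow {..<n}"
    by (simp add: lessThan_Suc Pow_insert)
  have disj: "Pow {..<n} \<inter> insert n ` Pow {..<n} = {}" by auto
  have inj: "inj_on (insert n) (Pow {..<n})"
    by (rule inj_onI) (metis Pow_iff insert_ident lessThan_iff less_irrefl subsetD)
  have "(\<Sum>S\<in>Pow {..<Suc n}. ?w S * (if 0 < Suc n \<and> Suc n - 1 \<in> S then 2 else 1))
      = (\<Sum>S\<in>Pow {..<n}. ?w S) + (\<Sum>S\<in>Pow {..<n}. ?w (insert n S) * 2)"
    unfolding P
    apply (subst sum.union_disjoint)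
       apply (auto simp: sum.reindex[OF inj])
    apply (rule sum.cong, auto)
    done
  also have "\<dots> = (\<Sum>S\<in>Pow {..<n}. ?w S * (1 + (if 0 < n \<and> n - 1 \<in> S then 1 else z)))"
  proof -
    have "?w (insert n S) * 2 = ?w S * (if 0 < n \<and> n - 1 \<in> S then 1 else z)" if "S \<in> Pow {..<n}" for S
    proof -
      have fin: "finite S" using that finite_subset by blast
      have "n \<notin> S" using that by auto
      then show ?thesis using runs_insert[of S n] that fin by (auto simp: card_insert_if)
    qed
    then show ?thesis by (simp add: sum.distrib[symmetric] algebra_simps)
  qed
  also have "\<dots> \<le> (\<Sum>S\<in>Pow {..<n}. (1+z) * (?w S * (if 0 < n \<and> n - 1 \<in> S then 2 else 1)))"
    by (rule sum_mono) (use z in \<open>auto simp: algebra_simps\<close>)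
  also have "\<dots> \<le> (1+z) * (1+z)^n"
    using Suc z by (simp add: sum_distrib_left[symmetric] mult_left_mono)
  finally show ?case by simp
qed

lemma gf_card:
  fixes z :: real assumes z: "z \<ge> 0"
  shows "(\<Sum>S\<in>{S. S \<subseteq> {..<n} \<and> card S = t}. z ^ runs S) \<le> 2^t * (1+z)^n"
proof -
  have "(\<Sum>S\<in>{S. S \<subseteq> {..<n} \<and> card S = t}. z ^ runs S)
      = 2^t * (\<Sum>S\<in>{S. S \<subseteq> {..<n} \<and> card S = t}. (1/2)^card S * z ^ runs S)"
    by (simp add: sum_distrib_left power_one_over)
  also have "(\<Sum>S\<in>{S. S \<subseteq> {..<n} \<and> card S = t}. (1/2)^card S * z ^ runs S)
      \<le> (\<Sum>S\<in>Pow {..<n}. (1/2)^card S * z ^ runs S * (if 0 < n \<and> n - 1 \<in> S then 2 else 1))"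
  proof -
    have "(\<Sum>S\<in>{S. S \<subseteq> {..<n} \<and> card S = t}. (1/2)^card S * z ^ runs S)
      \<le> (\<Sum>S\<in>Pow {..<n}. (1/2::real)^card S * z ^ runs S)"
      by (rule sum_mono2) (use z in auto)
    also have "\<dots> \<le> (\<Sum>S\<in>Pow {..<n}. (1/2)^card S * z ^ runs S * (if 0 < n \<and> n - 1 \<in> S then 2 else 1))"
      by (rule sum_mono) (use z in auto)
    finally show ?thesis .
  qed
  also note gf_step[OF z, of n]
  finally show ?thesis by simp
qed

definition rc :: "nat \<Rightarrow> nat set \<Rightarrow> nat" where
  "rc n S = card {i\<in>S. (i+1) mod n \<notin> S}"

definition hc :: "nat \<Rightarrow> nat set \<Rightarrow> nat" where
  "hc n S = card {i\<in>{..<n}. i \<in> S \<and> (i+1) mod n \<in> S}"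

lemma hc_rc: assumes "S \<subseteq> {..<n}" shows "hc n S + rc n S = card S"
proof -
  have fin: "finite S" using assms finite_subset by blast
  have "{i\<in>{..<n}. i \<in> S \<and> (i+1) mod n \<in> S} = {i\<in>S. (i+1) mod n \<in> S}" using assms by auto
  moreover have "S = {i\<in>S. (i+1) mod n \<in> S} \<union> {i\<in>S. (i+1) mod n \<notin> S}" by auto
  then have "card S = card {i\<in>S. (i+1) mod n \<in> S} + card {i\<in>S. (i+1) mod n \<notin> S}"
    using fin by (metis (no_types, lifting) card_Un_disjoint disjoint_iff finite_Un mem_Collect_eq)
  ultimately show ?thesis unfolding hc_def rc_def by simp
qed

lemma runs_le_rc: assumes "S \<subseteq> {..<n}" shows "runs S \<le> rc n S + 1"
proof -
  have fin: "finite S" using assms finite_subset by blast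
  have "{i\<in>S. Suc i \<notin> S} \<subseteq> insert (n - 1) {i\<in>S. (i+1) mod n \<notin> S}"
  proof
    fix i assume i: "i \<in> {i\<in>S. Suc i \<notin> S}"
    show "i \<in> insert (n - 1) {i\<in>S. (i+1) mod n \<notin> S}"
    proof (cases "i = n - 1")
      case False
      then have "i + 1 < n" using i assms by auto
      then show ?thesis using i by auto
    qed simp
  qed
  then have "runs S \<le> card (insert (n - 1) {i\<in>S. (i+1) mod n \<notin> S})"
    unfolding runs_def by (rule card_mono[rotated]) (use fin in auto)
  also have "\<dots> \<le> rc n S + 1" unfolding rc_def using fin by (simp add: card_insert_if)
  finally show ?thesis .
qed

lemma rc_pos: assumes "S \<subseteq> {..<n}" "S \<noteq> {}" "card S < n" shows "rc n S \<ge> 1"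
proof (rule ccontr)
  assume "\<not> rc n S \<ge> 1"
  then have "rc n S = 0" by simp
  have fin: "finite S" using assms finite_subset by blast
  then have cl: "\<And>i. i \<in> S \<Longrightarrow> (i+1) mod n \<in> S"
    using \<open>rc n S = 0\<close> unfolding rc_def by auto
  obtain x where x: "x \<in> S" using assms by auto
  have n0: "n > 0" using assms x by auto
  have all: "(x + j) mod n \<in> S" for j
  proof (induction j)
    case 0 then show ?case using x assms by auto
  next
    case (Suc j)
    have "(x + Suc j) mod n = ((x + j) mod n + 1) mod n" by (simp add: mod_Suc_eq)
    then show ?case using cl[OF Suc] by simp
  qed
  have "{..<n} \<subseteq> S"
  proof
    fix y assume "y \<in> {..<n}"
    then have "y = (x + (n - x + y)) mod n" using x assms by auto
    then show "y \<in> S" using all by metis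
  qed
  then have "card {..<n} \<le> card S" using fin card_mono by blast
  then show False using assms by simp
qed

lemma exp_fact: assumes "(x::real) \<ge> 0" shows "x^m / fact m \<le> exp x"
proof -
  have s: "summable (\<lambda>n. x^n /\<^sub>R fact n)" using exp_converges sums_summable by blast
  have "(\<Sum>n\<in>{m}. x^n /\<^sub>R fact n) \<le> (\<Sum>n. x^n /\<^sub>R fact n)"
    by (rule sum_le_suminf[OF s]) (use assms in auto)
  also have "\<dots> = exp x" using exp_converges sums_unique by metis
  finally show ?thesis by (simp add: divide_inverse mult.commute)
qed

lemma choose_fact_le: "real (M choose m) * fact m \<le> real M ^ m"
proof (cases "m \<le> M")
  case True
  have "(M choose m) * fact m = fact M div fact (M - m)"
    using binomial_fact_lemma[OF True]
    by (metis fact_nonzero mult.commute nonzero_mult_div_cancel_right mult.assoc)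
  also have "\<dots> \<le> M ^ m" by (rule fact_div_fact_le_pow[OF True])
  finally have "(M choose m) * fact m \<le> M ^ m" .
  then show ?thesis by (metis of_nat_fact of_nat_le_iff of_nat_mult of_nat_power)
next
  case False then show ?thesis by (simp add: binomial_eq_0)
qed

lemma term_bound:
  fixes n M m t k :: nat
  assumes "1 \<le> t" "t \<le> m" "M \<le> n" "2 \<le> k" "t \<le> n"
  shows "real (M choose m) * (real t / real n)^(k*m) \<le> (exp 1 * real t / real n)^m"
proof -
  have n0: "real n > 0" using assms by auto
  have t0: "real t > 0" using assms by auto
  have q: "real t / real n \<le> 1" "0 \<le> real t / real n" using assms n0 by auto
  have c1: "real (M choose m) \<le> real n ^ m / fact m"
  proof -
    have "real (M choose m) * fact m \<le> real n ^ m"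
      using choose_fact_le[of M m] assms by (meson of_nat_le_iff order_trans power_mono of_nat_0_le_iff)
    then show ?thesis by (simp add: field_simps)
  qed
  have c2: "(real t / real n)^(k*m) \<le> (real t / real n)^(2*m)"
    by (rule power_decreasing) (use assms q in \<open>auto\<close>)
  have c3: "real t ^ m / exp (real m) \<le> fact m"
  proof -
    have "real m ^ m / fact m \<le> exp (real m)" by (rule exp_fact) simp
    moreover have "real t ^ m \<le> real m ^ m" using assms by (simp add: power_mono)
    ultimately have "real t ^ m / fact m \<le> exp (real m)"
      by (meson divide_right_mono fact_ge_zero order_trans)
    then show ?thesis by (simp add: field_simps)
  qed
  have "real (M choose m) * (real t / real n)^(k*m) \<le> real n ^ m / fact m * (real t / real n)^(2*m)"
    using c1 c2 by (meson mult_mono of_nat_0_le_iff q(2) zero_le_power order_trans divide_nonneg_nonneg fact_ge_zero zero_le_power)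
  also have "\<dots> = (real t ^ 2 / real n) ^ m / fact m"
    using n0 by (simp add: field_simps power_mult power2_eq_square power_mult_distrib)
  also have "\<dots> \<le> (real t ^ 2 / real n) ^ m / (real t ^ m / exp (real m))"
    by (rule divide_left_mono[OF c3]) (use t0 n0 in auto)
  also have "\<dots> = (exp 1 * real t / real n)^m"
    using t0 n0 by (simp add: field_simps power_mult_distrib power2_eq_square exp_of_nat_mult[symmetric])
  finally show ?thesis .
qed

definition Om :: "nat \<Rightarrow> nat \<Rightarrow> nat \<Rightarrow> (nat \<Rightarrow> nat \<Rightarrow> nat) set" where
  "Om n k M = {..<M} \<rightarrow>\<^sub>E ({..<k} \<rightarrow>\<^sub>E {..<n})"

definition Acnt :: "nat \<Rightarrow> nat \<Rightarrow> (nat \<Rightarrow> nat \<Rightarrow> nat) \<Rightarrow> nat set \<Rightarrow> nat" where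
  "Acnt k M E S = card {i\<in>{..<M}. E i ` {..<k} \<subseteq> S}"

lemma card_Om: "card (Om n k M) = n ^ (k * M)"
  unfolding Om_def by (simp add: card_PiE power_mult)

lemma card_PiE_const: "card ({..<k} \<rightarrow>\<^sub>E X) = card X ^ k"
  by (simp add: card_PiE)

lemma count_event:
  assumes S: "S \<subseteq> {..<n}"
  shows "card {E\<in>Om n k M. m \<le> Acnt k M E S} \<le> (M choose m) * (card S ^ k) ^ m * (n ^ k) ^ (M - m)"
proof -
  let ?F = "\<lambda>I. PiE {..<M} (\<lambda>i. if i \<in> I then {..<k} \<rightarrow>\<^sub>E S else {..<k} \<rightarrow>\<^sub>E {..<n})"
  let ?I = "{I. I \<subseteq> {..<M} \<and> card I = m}"
  have fin: "finite S" using S finite_subset by blast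
  have sub: "{E\<in>Om n k M. m \<le> Acnt k M E S} \<subseteq> (\<Union>I\<in>?I. ?F I)"
  proof
    fix E assume E: "E \<in> {E\<in>Om n k M. m \<le> Acnt k M E S}"
    then have "m \<le> card {i\<in>{..<M}. E i ` {..<k} \<subseteq> S}" unfolding Acnt_def by simp
    then obtain I where I: "I \<subseteq> {i\<in>{..<M}. E i ` {..<k} \<subseteq> S}" "card I = m"
      by (rule obtain_subset_with_card_n)
    have "E \<in> ?F I"
    proof -
      have EO: "E \<in> Om n k M" using E by simp
      show ?thesis unfolding PiE_iff
      proof (intro conjI ballI)
        fix i assume i: "i \<in> {..<M}"
        have Ei: "E i \<in> {..<k} \<rightarrow>\<^sub>E {..<n}" using EO i unfolding Om_def by blast
        show "E i \<in> (if i \<in> I then {..<k} \<rightarrow>\<^sub>E S else {..<k} \<rightarrow>\<^sub>E {..<n})"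
        proof (cases "i \<in> I")
          case True
          then have "E i ` {..<k} \<subseteq> S" using I(1) by blast
          then show ?thesis using True Ei by (auto simp: PiE_iff)
        qed (use Ei in simp)
      next
        show "E \<in> extensional {..<M}" using EO unfolding Om_def by (simp add: PiE_iff)
      qed
    qed
    moreover have "I \<in> ?I" using I by auto
    ultimately show "E \<in> (\<Union>I\<in>?I. ?F I)" by blast
  qed
  have cF: "card (?F I) = (card S ^ k) ^ m * (n ^ k) ^ (M - m)" if "I \<in> ?I" for I
  proof -
    have "card (?F I) = (\<Prod>i<M. card (if i \<in> I then {..<k} \<rightarrow>\<^sub>E S else {..<k} \<rightarrow>\<^sub>E {..<n}))"
      by (simp add: card_PiE)
    also have "\<dots> = (\<Prod>i<M. if i \<in> I then card S ^ k else n ^ k)"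
      by (rule prod.cong) (simp_all add: card_PiE_const)
    also have "\<dots> = (card S ^ k) ^ card ({..<M} \<inter> I) * (n ^ k) ^ card ({..<M} - I)"
      by (simp add: prod.If_cases Diff_eq)
    also have "card ({..<M} \<inter> I) = m" using that by (simp add: Int_absorb1)
    also have "card ({..<M} - I) = M - m" 
    proof -
      have "finite I" "I \<subseteq> {..<M}" using that finite_subset by auto
      then show ?thesis using that by (simp add: card_Diff_subset)
    qed
    finally show ?thesis .
  qed
  have "card {E\<in>Om n k M. m \<le> Acnt k M E S} \<le> card (\<Union>I\<in>?I. ?F I)"
    by (rule card_mono[OF _ sub]) (use fin in \<open>simp add: finite_PiE\<close>)
  also have "\<dots> \<le> (\<Sum>I\<in>?I. card (?F I))" by (rule card_UN_le) auto
  also have "\<dots> = (\<Sum>I\<in>?I. (card S ^ k) ^ m * (n ^ k) ^ (M - m))" using cF by simp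
  also have "\<dots> = (M choose m) * (card S ^ k) ^ m * (n ^ k) ^ (M - m)"
    using n_subsets[of "{..<M}" m] by simp
  finally show ?thesis .
qed

lemma prob_event:
  assumes S: "S \<subseteq> {..<n}" and n: "n > 0"
  shows "real (card {E\<in>Om n k M. m \<le> Acnt k M E S}) / real (card (Om n k M))
     \<le> real (M choose m) * (real (card S) / real n) ^ (k * m)"
proof (cases "m \<le> M")
  case True
  have "real (card {E\<in>Om n k M. m \<le> Acnt k M E S}) \<le> real (M choose m) * (real (card S) ^ k) ^ m * (real n ^ k) ^ (M - m)"
  proof -
    have "card {E\<in>Om n k M. m \<le> Acnt k M E S} \<le> (M choose m) * (card S ^ k) ^ m * (n ^ k) ^ (M - m)"
      by (rule count_event[OF S])
    then have "real (card {E\<in>Om n k M. m \<le> Acnt k M E S}) \<le> real ((M choose m) * (card S ^ k) ^ m * (n ^ k) ^ (M - m))"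
      by (simp only: of_nat_le_iff)
    then show ?thesis by simp
  qed
  moreover have "real (card (Om n k M)) = (real n ^ k) ^ m * (real n ^ k) ^ (M - m)"
  proof -
    have e: "k * M = k * m + k * (M - m)" using True by (simp add: diff_mult_distrib2)
    have "real (card (Om n k M)) = real n ^ (k * M)" by (simp add: card_Om)
    also have "\<dots> = real n ^ (k * m) * real n ^ (k * (M - m))" by (subst e) (rule power_add)
    also have "\<dots> = (real n ^ k) ^ m * (real n ^ k) ^ (M - m)" by (simp only: power_mult)
    finally show ?thesis .
  qed
  ultimately show ?thesis
  proof -
    assume X: "real (card {E\<in>Om n k M. m \<le> Acnt k M E S}) \<le> real (M choose m) * (real (card S) ^ k) ^ m * (real n ^ k) ^ (M - m)"
      and D: "real (card (Om n k M)) = (real n ^ k) ^ m * (real n ^ k) ^ (M - m)"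
    have bpos: "(real n ^ k) ^ (M - m) > 0" "(real n ^ k) ^ m > 0" using n by auto
    have "real (card {E\<in>Om n k M. m \<le> Acnt k M E S}) / real (card (Om n k M))
        \<le> real (M choose m) * (real (card S) ^ k) ^ m * (real n ^ k) ^ (M - m) / ((real n ^ k) ^ m * (real n ^ k) ^ (M - m))"
      unfolding D by (rule divide_right_mono[OF X]) (use bpos in \<open>simp add: n\<close>)
    also have "\<dots> = real (M choose m) * (real (card S) ^ k) ^ m / (real n ^ k) ^ m"
      by (rule nonzero_mult_divide_mult_cancel_right) (use bpos in linarith)
    also have "\<dots> = real (M choose m) * (real (card S) / real n) ^ (k * m)"
      by (simp only: power_mult power_divide times_divide_eq_right)
    finally show ?thesis .
  qed
next
  case False
  then have "M choose m = 0" by (simp add: binomial_eq_0)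
  then have "card {E\<in>Om n k M. m \<le> Acnt k M E S} = 0" using count_event[OF S, of k M m] by (simp only: mult_0 le_0_eq)
  then show ?thesis by simp
qed

lemma comb_bound:
  assumes S: "S \<subseteq> {..<n}" and ne: "0 < card S" and lt: "card S < n" and l: "2 \<le> l"
    and w: "l * card S \<le> induced_weight n k M l E S"
  shows "card S + max 1 (runs S - 1) \<le> Acnt k M E S"
proof -
  have iw: "induced_weight n k M l E S = Acnt k M E S + (l - 1) * hc n S"
    unfolding induced_weight_def Acnt_def hc_def by simp
  have hr: "hc n S + rc n S = card S" by (rule hc_rc[OF S])
  have r1: "rc n S \<ge> 1" by (rule rc_pos[OF S]) (use ne lt in auto)
  have ru: "runs S \<le> rc n S + 1" by (rule runs_le_rc[OF S])
  have A: "hc n S + 2 * rc n S \<le> Acnt k M E S"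
  proof -
    obtain l' where l': "l = l' + 2" using l by (metis add.commute le_Suc_ex)
    have "l * (hc n S + rc n S) \<le> Acnt k M E S + (l - 1) * hc n S" using w iw hr by simp
    then show ?thesis unfolding l' by (simp add: algebra_simps)
  qed
  have mx: "max 1 (runs S - 1) \<le> rc n S" using r1 ru by simp
  show ?thesis using A hr mx by linarith
qed

definition Kc :: real where "Kc = 2 * exp (exp 1)"
definition Cc :: real where "Cc = Kc * exp 1"
definition dc :: real where "dc = 1 / (4 * Cc)"
definition Dc :: real where "Dc = exp 1 ^ 2 + 32 * Kc * Cc"

lemma consts_pos: "Kc \<ge> 2" "Cc \<ge> 2 * exp 1" "dc > 0" "dc * exp 1 \<le> 1/8" "Dc > 0"
proof -
  show k: "Kc \<ge> 2" unfolding Kc_def by simp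
  then show c: "Cc \<ge> 2 * exp 1" unfolding Cc_def by simp
  have e0: "exp (1::real) > 0" by simp
  have cp: "Cc > 0" using c e0 by linarith
  then show "dc > 0" unfolding dc_def by simp
  have "dc * exp 1 = exp 1 / (4 * Cc)" unfolding dc_def by simp
  also have "\<dots> \<le> 1/8" using c cp by (simp add: pos_divide_le_eq)
  finally show "dc * exp 1 \<le> 1/8" .
  have kp: "Kc > 0" using k by linarith
  have "32 * Kc * Cc > 0" using kp cp by simp
  moreover have "exp 1 ^ 2 > (0::real)" by simp
  ultimately show "Dc > 0" unfolding Dc_def by linarith
qed

lemma Cc_pos: "Cc > 0"
  using consts_pos(2) exp_gt_zero[of 1] by linarith

lemma sum_t1:
  assumes n: "n \<ge> 3"
  shows "(\<Sum>S\<in>{S. S \<subseteq> {..<n} \<and> card S = 1}. (exp 1 * real (card S) / real n) ^ (card S + max 1 (runs S - 1)))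
    \<le> exp 1 ^ 2 / real n"
proof -
  have z: "exp 1 / real n \<le> 1" "0 \<le> exp 1 / real n"
    using n exp_le by (auto simp: field_simps)
  have "(\<Sum>S\<in>{S. S \<subseteq> {..<n} \<and> card S = 1}. (exp 1 * real (card S) / real n) ^ (card S + max 1 (runs S - 1)))
      \<le> (\<Sum>S\<in>{S. S \<subseteq> {..<n} \<and> card S = 1}. (exp 1 / real n) ^ 2)"
  proof (rule sum_mono)
    fix S assume "S \<in> {S. S \<subseteq> {..<n} \<and> card S = 1}"
    then have c: "card S = 1" by simp
    show "(exp 1 * real (card S) / real n) ^ (card S + max 1 (runs S - 1)) \<le> (exp 1 / real n) ^ 2"
    proof -
      have "(exp 1 / real n) ^ (1 + max 1 (runs S - 1)) \<le> (exp 1 / real n) ^ 2"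
        using z by (intro power_decreasing) auto
      then show ?thesis unfolding c by simp
    qed
  qed
  also have "\<dots> = real n * (exp 1 / real n) ^ 2"
    using n_subsets[of "{..<n}" 1] by simp
  also have "\<dots> = exp 1 ^ 2 / real n" using n by (simp add: power2_eq_square field_simps)
  finally show ?thesis .
qed

lemma sum_t:
  assumes t: "2 \<le> t" and tn: "real t < dc * real n"
  shows "(\<Sum>S\<in>{S. S \<subseteq> {..<n} \<and> card S = t}. (exp 1 * real (card S) / real n) ^ (card S + max 1 (runs S - 1)))
    \<le> 16 * Kc * Cc / real n * (1/2)^t"
proof -
  have n0: "real n > 0"
  proof (rule ccontr)
    assume "\<not> real n > 0" then have "n = 0" by simp
    then show False using tn by simp
  qed
  define z where "z = exp 1 * real t / real n"
  have z0: "z \<ge> 0" unfolding z_def by simp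
  have ztn: "z * real n = exp 1 * real t" unfolding z_def using n0 by simp
  have z1: "z \<le> 1"
  proof -
    have "exp 1 * real t \<le> exp 1 * (dc * real n)" using tn by simp
    also have "\<dots> = (dc * exp 1) * real n" by simp
    also have "\<dots> \<le> 1/8 * real n" using consts_pos(4) n0 by (intro mult_right_mono) auto
    finally show ?thesis unfolding z_def using n0 by (simp add: field_simps)
  qed
  have "(\<Sum>S\<in>{S. S \<subseteq> {..<n} \<and> card S = t}. (exp 1 * real (card S) / real n) ^ (card S + max 1 (runs S - 1)))
      \<le> (\<Sum>S\<in>{S. S \<subseteq> {..<n} \<and> card S = t}. z ^ (t - 1) * z ^ runs S)"
  proof (rule sum_mono)
    fix S assume "S \<in> {S. S \<subseteq> {..<n} \<and> card S = t}"
    then have c: "card S = t" by simp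
    have "z ^ (card S + max 1 (runs S - 1)) \<le> z ^ (t - 1 + runs S)"
      using z0 z1 c t by (intro power_decreasing) auto
    then show "(exp 1 * real (card S) / real n) ^ (card S + max 1 (runs S - 1)) \<le> z ^ (t - 1) * z ^ runs S"
      unfolding c z_def by (simp add: power_add)
  qed
  also have "\<dots> = z ^ (t - 1) * (\<Sum>S\<in>{S. S \<subseteq> {..<n} \<and> card S = t}. z ^ runs S)"
    by (simp add: sum_distrib_left)
  also have "\<dots> \<le> z ^ (t - 1) * (2 ^ t * (1 + z) ^ n)"
    by (rule mult_left_mono[OF gf_card[OF z0]]) (use z0 in simp)
  also have "\<dots> \<le> z ^ (t - 1) * (2 ^ t * exp (exp 1) ^ t)"
  proof -
    have "(1 + z) ^ n \<le> exp z ^ n" using z0 by (intro power_mono) (auto simp: exp_ge_add_one_self add.commute)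
    also have "\<dots> = exp (z * real n)" by (simp add: exp_of_nat_mult[symmetric] mult.commute)
    also have "\<dots> = exp (exp 1) ^ t" unfolding ztn by (simp add: exp_of_nat_mult[symmetric] mult.commute)
    finally show ?thesis using z0 by (intro mult_left_mono) auto
  qed
  also have "\<dots> = Kc * (Cc * real t / real n) ^ (t - 1)"
  proof -
    have ts: "t = Suc (t - 1)" using t by simp
    have a: "2 ^ t * exp (exp 1) ^ t = Kc * Kc ^ (t - 1)"
    proof -
      have "2 ^ t * exp (exp 1) ^ t = Kc ^ t" unfolding Kc_def by (simp only: power_mult_distrib)
      also have "\<dots> = Kc * Kc ^ (t - 1)" by (subst ts) (simp only: power_Suc)
      finally show ?thesis .
    qed
    have b: "Kc * z = Cc * real t / real n" unfolding Cc_def z_def by simp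
    have "z ^ (t - 1) * (2 ^ t * exp (exp 1) ^ t) = Kc * (Kc ^ (t - 1) * z ^ (t - 1))"
      unfolding a by (simp only: ac_simps)
    also have "\<dots> = Kc * (Kc * z) ^ (t - 1)" by (simp only: power_mult_distrib)
    finally show ?thesis unfolding b .
  qed
  also have "\<dots> \<le> 16 * Kc * Cc / real n * (1/2)^t"
  proof -
    define q where "q = Cc * real t / real n"
    have Cc0: "Cc \<ge> 0" using consts_pos(2) exp_gt_zero[of 1] by linarith
    have q0: "q \<ge> 0" unfolding q_def using Cc0 n0 by simp
    have q4: "q \<le> 1/4"
    proof -
      have "Cc * real t \<le> Cc * (dc * real n)" using tn Cc0 by (intro mult_left_mono) auto
      also have "\<dots> = real n / 4" unfolding dc_def using Cc_pos by (simp add: field_simps)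
      finally show ?thesis unfolding q_def using n0 by (simp add: field_simps)
    qed
    obtain u where u: "t = u + 2" using t by (metis add.commute le_Suc_ex)
    have "q ^ (t - 1) = q * q ^ u" unfolding u by simp
    also have "\<dots> \<le> q * (1/4) ^ u" using q0 q4 by (intro mult_left_mono power_mono) auto
    finally have A: "q ^ (t - 1) \<le> q * (1/4) ^ u" .
    have B: "real t * (1/4) ^ u \<le> 16 * (1/2) ^ t"
    proof -
      have "real u + 2 \<le> 4 * 2 ^ u"
      proof -
        have "u < 2 ^ u" by (rule less_exp)
        then have "real u \<le> 2 ^ u" by (metis less_imp_le of_nat_le_iff of_nat_numeral of_nat_power)
        moreover have "(1::real) \<le> 2 ^ u" by simp
        ultimately show ?thesis by linarith
      qed
      then have "(real u + 2) * ((1/2)^u * (1/2)^u) \<le> (4 * 2 ^ u) * ((1/2)^u * (1/2)^u)"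
        by (intro mult_right_mono) auto
      also have "\<dots> = 4 * (((2::real) ^ u * (1/2)^u) * (1/2)^u)" by (simp only: ac_simps)
      also have "(2::real) ^ u * (1/2)^u = 1" by (simp add: power_mult_distrib[symmetric])
      also have "4 * (1 * (1/2::real)^u) = 4 * (1/2)^u" by simp
      finally show ?thesis unfolding u
        by (simp add: power_mult_distrib[symmetric] power_add algebra_simps)
    qed
    have "Kc * q ^ (t - 1) \<le> Kc * (q * (1/4) ^ u)" using A consts_pos by (intro mult_left_mono) auto
    also have "\<dots> = Kc * Cc / real n * (real t * (1/4) ^ u)" unfolding q_def by simp
    also have "\<dots> \<le> Kc * Cc / real n * (16 * (1/2) ^ t)"
      using B consts_pos Cc0 n0 by (intro mult_left_mono) auto
    also have "Kc * Cc / real n * (16 * (1/2) ^ t) = 16 * Kc * Cc / real n * (1/2)^t" by simp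
    finally show ?thesis unfolding q_def .
  qed
  finally show ?thesis .
qed

lemma geom_half: "(\<Sum>t\<in>T. (1/2::real)^t) \<le> 2" if "T \<subseteq> {..<n}" for T n
proof -
  have "(\<Sum>t\<in>T. (1/2::real)^t) \<le> (\<Sum>t<n. (1/2::real)^t)"
    by (rule sum_mono2) (use that in auto)
  also have "\<dots> = (1 - (1/2)^n) / (1 - 1/2)" using sum_gp_strict[of "1/2::real" n] by simp
  also have "\<dots> \<le> 2" by simp
  finally show ?thesis .
qed

lemma main_bound:
  fixes k l n :: nat and c :: real
  assumes k: "k \<ge> 2" and l: "l \<ge> 2" and c: "c \<le> 1" and n: "n \<ge> 3"
  shows "measure_pmf.prob (edges_pmf n k (nat \<lfloor>c * real n\<rfloor>))
            {E. \<exists>S \<subseteq> {..<n}. 0 < card S \<and> real (card S) < dc * real n \<and>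
                  l * card S \<le> induced_weight n k (nat \<lfloor>c * real n\<rfloor>) l E S} \<le> Dc / real n"
proof -
  define M where "M = nat \<lfloor>c * real n\<rfloor>"
  define Bad where "Bad = {E. \<exists>S \<subseteq> {..<n}. 0 < card S \<and> real (card S) < dc * real n \<and>
                  l * card S \<le> induced_weight n k M l E S}"
  define SS where "SS = {S. S \<subseteq> {..<n} \<and> 0 < card S \<and> real (card S) < dc * real n}"
  define ms where "ms S = card S + max 1 (runs S - 1)" for S
  define Ev where "Ev S = {E \<in> Om n k M. ms S \<le> Acnt k M E S}" for S
  define g where "g S = (exp 1 * real (card S) / real n) ^ ms S" for S
  define P where "P t = {S. S \<subseteq> {..<n} \<and> card S = t}" for t
  define T where "T = {t \<in> {2..<n}. real t < dc * real n}"
  have n0: "real n > 0" using n by simp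
  have Mn: "M \<le> n"
  proof -
    have "c * real n \<le> 1 * real n" using c by (intro mult_right_mono) auto
    then have "\<lfloor>c * real n\<rfloor> \<le> int n" by linarith
    then show ?thesis unfolding M_def by (simp add: nat_le_iff)
  qed
  have dc1: "dc < 1"
  proof -
    have "(1::real) \<le> exp 1" by simp
    then have "dc * 1 \<le> dc * exp 1" using consts_pos(3) by (intro mult_left_mono) auto
    then show ?thesis using consts_pos(4) by simp
  qed
  have dcn: "dc * real n \<le> real n" using dc1 consts_pos(3) by (intro mult_left_le_one_le) auto
  have finO: "finite (Om n k M)" unfolding Om_def by (simp add: finite_PiE)
  have neO: "Om n k M \<noteq> {}" 
  proof -
    have "0 \<in> {..<n}" using n by simp
    then have "{..<n} \<noteq> {}" by blast
    then show ?thesis unfolding Om_def by (simp add: PiE_eq_empty_iff)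
  qed
  have finSS: "finite SS" unfolding SS_def by (rule finite_subset[of _ "Pow {..<n}"]) auto
  have gnn: "g S \<ge> 0" for S unfolding g_def by simp
  have prob: "measure_pmf.prob (edges_pmf n k M) Bad = real (card (Om n k M \<inter> Bad)) / real (card (Om n k M))"
    unfolding edges_pmf_def using measure_pmf_of_set[OF neO finO, of Bad] by (simp add: Om_def)
  have sub: "Om n k M \<inter> Bad \<subseteq> (\<Union>S\<in>SS. Ev S)"
  proof
    fix E assume E: "E \<in> Om n k M \<inter> Bad"
    then obtain S where S: "S \<subseteq> {..<n}" "0 < card S" "real (card S) < dc * real n"
      "l * card S \<le> induced_weight n k M l E S" unfolding Bad_def by auto
    have "real (card S) < real n" using S(3) dcn by linarith
    then have "card S < n" by simp
    then have "ms S \<le> Acnt k M E S" unfolding ms_def using comb_bound[OF S(1,2) _ l S(4)] by simp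
    then have "E \<in> Ev S" using E unfolding Ev_def by simp
    moreover have "S \<in> SS" using S unfolding SS_def by simp
    ultimately show "E \<in> (\<Union>S\<in>SS. Ev S)" by blast
  qed
  have "real (card (Om n k M \<inter> Bad)) \<le> real (\<Sum>S\<in>SS. card (Ev S))"
  proof -
    have "card (Om n k M \<inter> Bad) \<le> card (\<Union>S\<in>SS. Ev S)"
      by (rule card_mono[OF _ sub]) (use finSS finO in \<open>auto simp: Ev_def\<close>)
    also have "\<dots> \<le> (\<Sum>S\<in>SS. card (Ev S))" by (rule card_UN_le[OF finSS])
    finally show ?thesis by (simp only: of_nat_le_iff)
  qed
  then have "measure_pmf.prob (edges_pmf n k M) Bad \<le> (\<Sum>S\<in>SS. real (card (Ev S))) / real (card (Om n k M))"
    unfolding prob by (simp add: divide_right_mono)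
  also have "\<dots> = (\<Sum>S\<in>SS. real (card (Ev S)) / real (card (Om n k M)))"
    by (simp add: sum_divide_distrib)
  also have "\<dots> \<le> (\<Sum>S\<in>SS. g S)"
  proof (rule sum_mono)
    fix S assume S: "S \<in> SS"
    have Ssub: "S \<subseteq> {..<n}" using S unfolding SS_def by simp
    have t1: "1 \<le> card S" using S unfolding SS_def by simp
    have tn: "card S \<le> n" using card_mono[OF _ Ssub] by simp
    have "real (card (Ev S)) / real (card (Om n k M)) \<le> real (M choose ms S) * (real (card S) / real n) ^ (k * ms S)"
      unfolding Ev_def by (rule prob_event[OF Ssub]) (use n in simp)
    also have "\<dots> \<le> g S" unfolding g_def
      by (rule term_bound[OF t1 _ Mn k tn]) (simp add: ms_def)
    finally show "real (card (Ev S)) / real (card (Om n k M)) \<le> g S" .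
  qed
  also have "\<dots> \<le> (\<Sum>S\<in>P 1 \<union> (\<Union>t\<in>T. P t). g S)"
  proof (rule sum_mono2)
    show "finite (P 1 \<union> (\<Union>t\<in>T. P t))"
      by (rule finite_subset[of _ "Pow {..<n}"]) (auto simp: P_def)
    show "SS \<subseteq> P 1 \<union> (\<Union>t\<in>T. P t)"
    proof
      fix S assume S: "S \<in> SS"
      have "real (card S) < real n" using S dcn unfolding SS_def by auto
      then show "S \<in> P 1 \<union> (\<Union>t\<in>T. P t)" using S unfolding SS_def P_def T_def by auto
    qed
  qed (use gnn in auto)
  also have "\<dots> \<le> (\<Sum>S\<in>P 1. g S) + (\<Sum>S\<in>(\<Union>t\<in>T. P t). g S)"
  proof -
    have f1: "finite (P 1)" by (rule finite_subset[of _ "Pow {..<n}"]) (auto simp: P_def)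
    have f2: "finite (\<Union>t\<in>T. P t)" by (rule finite_subset[of _ "Pow {..<n}"]) (auto simp: P_def)
    show ?thesis using sum_Un[OF f1 f2, of g] sum_nonneg[of "P 1 \<inter> (\<Union>t\<in>T. P t)" g] gnn by simp
  qed
  also have "(\<Sum>S\<in>(\<Union>t\<in>T. P t). g S) = (\<Sum>t\<in>T. \<Sum>S\<in>P t. g S)"
    by (rule sum.UNION_disjoint) (auto simp: T_def P_def intro: finite_subset[of _ "Pow {..<n}"])
  also have "(\<Sum>S\<in>P 1. g S) \<le> exp 1 ^ 2 / real n"
    using sum_t1[OF n] unfolding P_def g_def ms_def by simp
  also have "(\<Sum>t\<in>T. \<Sum>S\<in>P t. g S) \<le> (\<Sum>t\<in>T. 16 * Kc * Cc / real n * (1/2)^t)"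
  proof (rule sum_mono)
    fix t assume t: "t \<in> T"
    show "(\<Sum>S\<in>P t. g S) \<le> 16 * Kc * Cc / real n * (1/2)^t"
      using sum_t[of t n] t unfolding T_def P_def g_def ms_def by simp
  qed
  also have "\<dots> = 16 * Kc * Cc / real n * (\<Sum>t\<in>T. (1/2)^t)" by (simp add: sum_distrib_left)
  also have "\<dots> \<le> 16 * Kc * Cc / real n * 2"
    by (rule mult_left_mono[OF geom_half[of T n]]) (use consts_pos Cc_pos n0 in \<open>auto simp: T_def\<close>)
  finally show ?thesis unfolding M_def[symmetric] Bad_def[symmetric] Dc_def
    by (simp add: add_divide_distrib)
qed

theorem lemma5:
  fixes k l :: nat and c :: real
  assumes "k \<ge> 2" and "l \<ge> 2" and "c \<le> 1"
  shows "\<exists>\<delta>>0. (\<lambda>n. measure_pmf.prob (edges_pmf n k (nat \<lfloor>c * real n\<rfloor>))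
            {E. \<exists>S \<subseteq> {..<n}. 0 < card S \<and> real (card S) < \<delta> * real n \<and>
                  l * card S \<le> induced_weight n k (nat \<lfloor>c * real n\<rfloor>) l E S})
          \<longlonglongrightarrow> 0"
proof (intro exI conjI)
  show "dc > 0" by (rule consts_pos)
  show "(\<lambda>n. measure_pmf.prob (edges_pmf n k (nat \<lfloor>c * real n\<rfloor>))
            {E. \<exists>S \<subseteq> {..<n}. 0 < card S \<and> real (card S) < dc * real n \<and>
                  l * card S \<le> induced_weight n k (nat \<lfloor>c * real n\<rfloor>) l E S})
          \<longlonglongrightarrow> 0"
  proof (rule tendsto_sandwich[of "\<lambda>n. 0" _ _ "\<lambda>n. Dc / real n"])
    show "\<forall>\<^sub>F n in sequentially. 0 \<le> measure_pmf.prob (edges_pmf n k (nat \<lfloor>c * real n\<rfloor>))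
            {E. \<exists>S \<subseteq> {..<n}. 0 < card S \<and> real (card S) < dc * real n \<and>
                  l * card S \<le> induced_weight n k (nat \<lfloor>c * real n\<rfloor>) l E S}"
      by simp
    show "\<forall>\<^sub>F n in sequentially. measure_pmf.prob (edges_pmf n k (nat \<lfloor>c * real n\<rfloor>))
            {E. \<exists>S \<subseteq> {..<n}. 0 < card S \<and> real (card S) < dc * real n \<and>
                  l * card S \<le> induced_weight n k (nat \<lfloor>c * real n\<rfloor>) l E S} \<le> Dc / real n"
      by (rule eventually_mono[OF eventually_ge_at_top[of 3]]) (rule main_bound[OF assms])
    show "(\<lambda>n. 0) \<longlonglongrightarrow> 0" by simp
    show "(\<lambda>n. Dc / real n) \<longlonglongrightarrow> 0" by (rule lim_const_over_n)
  qed
qed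

end
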